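(* Let $n\ge4$ be even. The map $\rho:\mathcal F_{n-2}\to Y_1$, $z\mapsto w_0zs_{n-1}w_0$, is an order-preserving one-to-one mapping (onto $Y_1$) with respect to the Bruhat orders.
   Context: $s_i=(i,i+1)$; permutations compose right to left. For even $m$, $\mathcal F_m$ is the set of fixed-point-free involutions of $S_m$ with conjugation action and height $\ell/2$; its Bruhat order is the weakest partial order with $z\le tzt$ for transpositions $t$ with $\ell(z)\le\ell(tzt)$. Regard $\mathcal F_{n-2}\subset S_n$ (fixing $n-1,n$); $w_0$ is the longest element of $S_n$; $Y_1=\rho(\mathcal F_{n-2})\subseteq\mathcal F_n$, with the Bruhat order of $\mathcal F_n$ restricted. *)

theory Defs
  imports "HOL-Combinatorics.Combinatorics"
begin

text \<open>Permutations of {1..m} are functions nat => nat that permute {1..m}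
  (identity elsewhere); composition is right to left (function composition).
  Hence S_{n-2} is regarded as a subset of S_n fixing n-1 and n.\<close>

definition S :: "nat \<Rightarrow> (nat \<Rightarrow> nat) set" where
  "S m = {p. p permutes {1..m}}"

definition len :: "nat \<Rightarrow> (nat \<Rightarrow> nat) \<Rightarrow> nat" where
  "len m p = card {(i, j). 1 \<le> i \<and> i < j \<and> j \<le> m \<and> p j < p i}"

definition s :: "nat \<Rightarrow> nat \<Rightarrow> nat" where
  "s i = transpose i (i + 1)"

definition F :: "nat \<Rightarrow> (nat \<Rightarrow> nat) set" where
  "F m = {z \<in> S m. z \<circ> z = id \<and> (\<forall>i \<in> {1..m}. z i \<noteq> i)}"

definition transpositions :: "nat \<Rightarrow> (nat \<Rightarrow> nat) set" where
  "transpositions m = {transpose i j | i j. 1 \<le> i \<and> i < j \<and> j \<le> m}"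

definition bruhat_step :: "nat \<Rightarrow> (nat \<Rightarrow> nat) \<Rightarrow> (nat \<Rightarrow> nat) \<Rightarrow> bool" where
  "bruhat_step m z z' \<longleftrightarrow> z \<in> F m \<and>
     (\<exists>t \<in> transpositions m. z' = t \<circ> z \<circ> t \<and> len m z \<le> len m z')"

definition bruhatF :: "nat \<Rightarrow> (nat \<Rightarrow> nat) \<Rightarrow> (nat \<Rightarrow> nat) \<Rightarrow> bool" where
  "bruhatF m z z' \<longleftrightarrow> z \<in> F m \<and> z' \<in> F m \<and> (bruhat_step m)\<^sup>*\<^sup>* z z'"

definition w0 :: "nat \<Rightarrow> nat \<Rightarrow> nat" where
  "w0 n = (\<lambda>i. if 1 \<le> i \<and> i \<le> n then n + 1 - i else i)"

definition rho :: "nat \<Rightarrow> (nat \<Rightarrow> nat) \<Rightarrow> (nat \<Rightarrow> nat)" where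
  "rho n z = w0 n \<circ> z \<circ> s (n - 1) \<circ> w0 n"

definition Y1 :: "nat \<Rightarrow> (nat \<Rightarrow> nat) set" where
  "Y1 n = rho n ` F (n - 2)"

end

theory Submission imports Defs begin

lemma w0_w0: "w0 n (w0 n x) = x"
  by (auto simp: w0_def)

lemma w0_permutes: "w0 n permutes {1..n}"
  unfolding permutes_def
proof (intro conjI allI impI)
  fix x :: nat assume "x \<notin> {1..n}" thus "w0 n x = x" by (auto simp: w0_def)
next
  fix y show "\<exists>!x. w0 n x = y"
    by (rule ex1I[of _ "w0 n y"]) (simp add: w0_w0, metis w0_w0)
qed

lemma w0_in: "i \<in> {1..n} \<Longrightarrow> w0 n i = n + 1 - i" by (simp add: w0_def)

lemma perm_facts:
  assumes "p permutes {1..m}"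
  shows "\<And>k. k \<in> {1..m} \<Longrightarrow> p k \<in> {1..m}" "\<And>k. k \<notin> {1..m} \<Longrightarrow> p k = k"
  using assms permutes_in_image permutes_not_in by metis+

lemma len_w0:
  assumes p: "p permutes {1..m}"
  shows "len m (w0 m \<circ> p \<circ> w0 m) = len m p"
proof -
  let ?A = "{(i, j). 1 \<le> i \<and> i < j \<and> j \<le> m \<and> p j < p i}"
  let ?B = "{(i, j). 1 \<le> i \<and> i < j \<and> j \<le> m \<and> (w0 m \<circ> p \<circ> w0 m) j < (w0 m \<circ> p \<circ> w0 m) i}"
  let ?f = "\<lambda>(i::nat, j::nat). (m + 1 - j, m + 1 - i)"
  have inj: "inj_on ?f ?A" by (rule inj_onI) auto
  have "?B = ?f ` ?A"
  proof (rule set_eqI, rule iffI)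
    fix x assume "x \<in> ?B"
    then obtain i j where x: "x = (i, j)" "1 \<le> i" "i < j" "j \<le> m"
      "w0 m (p (w0 m j)) < w0 m (p (w0 m i))" by auto
    have pi: "p (m+1-i) \<in> {1..m}" "p (m+1-j) \<in> {1..m}"
    proof -
      have "m+1-i \<in> {1..m}" "m+1-j \<in> {1..m}" using x by auto
      thus "p (m+1-i) \<in> {1..m}" "p (m+1-j) \<in> {1..m}" using perm_facts(1)[OF p] by blast+
    qed
    have "p (m+1-i) < p (m+1-j)" using x(5) pi x by (simp add: w0_in)
    hence "(m+1-j, m+1-i) \<in> ?A" using x by auto
    moreover have "x = ?f (m+1-j, m+1-i)" using x by auto
    ultimately show "x \<in> ?f ` ?A" by blast
  next
    fix x assume "x \<in> ?f ` ?A"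
    then obtain i j where x: "x = (m+1-j, m+1-i)" "1 \<le> i" "i < j" "j \<le> m" "p j < p i" by auto
    have pi: "p i \<in> {1..m}" "p j \<in> {1..m}" using perm_facts(1)[OF p] x by auto
    have e: "w0 m (Suc m-i) = i" "w0 m (Suc m-j) = j" "w0 m (p i) = m+1-p i" "w0 m (p j) = m+1-p j"
      using x pi by (auto simp: w0_def)
    show "x \<in> ?B" using x pi by (auto simp: e)
  qed
  thus ?thesis unfolding len_def using card_image[OF inj] by simp
qed

lemma s_eq: "s (m+1) = transpose (m+1) (m+2)" by (simp add: s_def)

lemma len_s:
  assumes p: "p permutes {1..m}"
  shows "len (m+2) (p \<circ> s (m+1)) = Suc (len m p)"
proof -
  let ?A = "{(i, j). 1 \<le> i \<and> i < j \<and> j \<le> m \<and> p j < p i}"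
  let ?B = "{(i, j). 1 \<le> i \<and> i < j \<and> j \<le> m+2 \<and> (p \<circ> s (m+1)) j < (p \<circ> s (m+1)) i}"
  have pin: "\<And>k. 1 \<le> k \<Longrightarrow> k \<le> m \<Longrightarrow> 1 \<le> p k \<and> p k \<le> m" using perm_facts(1)[OF p] by auto
  have pout: "\<And>k. k > m \<Longrightarrow> p k = k" using perm_facts(2)[OF p] by auto
  have "?B = insert (m+1, m+2) ?A"
  proof (rule set_eqI)
    fix x :: "nat \<times> nat"
    obtain i j where x: "x = (i, j)" by fastforce
    show "x \<in> ?B \<longleftrightarrow> x \<in> insert (m+1, m+2) ?A"
    proof (cases "j \<le> m")
      case True
      then show ?thesis using x by (auto simp: s_def transpose_def)
    next
      case False
      show ?thesis
      proof (cases "j = m+1")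
        case True
        then show ?thesis using x pin[of i] pout[of "m+1"] pout[of "m+2"] by (auto simp: s_def transpose_def)
      next
        case j: False
        show ?thesis
        proof (cases "i \<le> m")
          case True
          then show ?thesis using x j False pin[of i] pout[of "m+1"] pout[of "m+2"] by (auto simp: s_def transpose_def)
        next
          case False
          then show ?thesis using x j pout[of "m+1"] pout[of "m+2"] by (auto simp: s_def transpose_def)
        qed
      qed
    qed
  qed
  moreover have "finite ?A"
    by (rule finite_subset[of _ "{1..m} \<times> {1..m}"]) auto
  moreover have "(m+1, m+2) \<notin> ?A" by auto
  ultimately show ?thesis unfolding len_def by simp
qed

lemma s_perm: "s (Suc m) permutes {1..m+2}"
  unfolding s_def by (rule permutes_swap_id) auto

lemma s_vals: "s (Suc m) (Suc m) = m+2" "s (Suc m) (m+2) = Suc m"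
  "k \<noteq> Suc m \<Longrightarrow> k \<noteq> m+2 \<Longrightarrow> s (Suc m) k = k"
  by (auto simp: s_def transpose_def)

lemma rho_eq: "rho (m+2) z = w0 (m+2) \<circ> z \<circ> s (Suc m) \<circ> w0 (m+2)"
  by (simp add: rho_def)

lemma rho_F:
  assumes z: "z \<in> F m"
  shows "rho (m+2) z \<in> F (m+2)"
proof -
  have zp: "z permutes {1..m}" and zz: "\<And>x. z (z x) = x" and fp: "\<And>i. i \<in> {1..m} \<Longrightarrow> z i \<noteq> i"
    using z by (auto simp: F_def S_def dest: fun_cong)
  have zp2: "z permutes {1..m+2}" using zp by (rule permutes_subset) auto
  have zin: "\<And>k. 1 \<le> k \<Longrightarrow> k \<le> m \<Longrightarrow> 1 \<le> z k \<and> z k \<le> m" using perm_facts(1)[OF zp] by auto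
  have zout: "\<And>k. k > m \<Longrightarrow> z k = k" using perm_facts(2)[OF zp] by auto
  have key: "z (s (Suc m) (z (s (Suc m) y))) = y" for y
  proof -
    consider "1 \<le> y \<and> y \<le> m" | "y = Suc m" | "y = m+2" | "\<not>(1 \<le> y \<and> y \<le> m)" "y \<noteq> Suc m" "y \<noteq> m+2" by blast
    thus ?thesis
    proof cases
      case 1 thus ?thesis using zin[of y] s_vals(3)[of y m] s_vals(3)[of "z y" m] zz[of y] by auto
    next
      case 2 thus ?thesis using s_vals zout[of "m+2"] zout[of "Suc m"] by simp
    next
      case 3 thus ?thesis using s_vals zout[of "m+2"] zout[of "Suc m"] by simp
    next
      case 4
      have "z y = y" using 4 zp perm_facts(2) by (metis atLeastAtMost_iff)
      thus ?thesis using 4 s_vals(3)[of y m] by simp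
    qed
  qed
  have perm: "rho (m+2) z permutes {1..m+2}"
    unfolding rho_eq
    by (intro permutes_compose w0_permutes s_perm zp2)
  have inv: "rho (m+2) z \<circ> rho (m+2) z = id"
    by (rule ext) (simp add: rho_def w0_w0 key)
  have nofix: "rho (m+2) z i \<noteq> i" if i: "i \<in> {1..m+2}" for i
  proof
    assume eq: "rho (m+2) z i = i"
    define k where "k = w0 (m+2) i"
    have k: "k \<in> {1..m+2}" using i by (auto simp: k_def w0_def)
    have "w0 (m+2) (z (s (Suc m) k)) = w0 (m+2) k" using eq by (simp add: rho_def k_def w0_w0)
    hence e: "z (s (Suc m) k) = k" by (metis w0_w0)
    consider "1 \<le> k \<and> k \<le> m" | "k = Suc m" | "k = m+2" using k by fastforce
    thus False
    proof cases
      case 1 thus ?thesis using e fp[of k] s_vals(3)[of k m] by auto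
    next
      case 2 thus ?thesis using e s_vals zout[of "m+2"] by simp
    next
      case 3 thus ?thesis using e s_vals zout[of "Suc m"] by simp
    qed
  qed
  show ?thesis using perm inv nofix by (simp add: F_def S_def)
qed

lemma rho_inj: "rho (m+2) z = rho (m+2) z' \<Longrightarrow> z = z'"
proof (rule ext)
  fix x assume h: "rho (m+2) z = rho (m+2) z'"
  have ss: "s (Suc m) (s (Suc m) x) = x" by (simp add: s_def)
  have "z x = w0 (m+2) (rho (m+2) z (w0 (m+2) (s (Suc m) x)))" by (simp add: rho_def w0_w0 ss)
  also have "\<dots> = w0 (m+2) (rho (m+2) z' (w0 (m+2) (s (Suc m) x)))" using h by simp
  also have "\<dots> = z' x" by (simp add: rho_def w0_w0 ss)
  finally show "z x = z' x" .
qed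

lemma len_rho:
  assumes "y permutes {1..m}"
  shows "len (m+2) (rho (m+2) y) = Suc (len m y)"
proof -
  have yp: "y \<circ> s (m+1) permutes {1..m+2}"
    using permutes_compose[OF s_perm permutes_subset[OF assms]] by auto
  have "rho (m+2) y = w0 (m+2) \<circ> (y \<circ> s (m+1)) \<circ> w0 (m+2)" by (simp add: rho_def o_assoc)
  hence "len (m+2) (rho (m+2) y) = len (m+2) (y \<circ> s (m+1))" using len_w0[OF yp] by simp
  also have "\<dots> = Suc (len m y)" by (rule len_s[OF assms])
  finally show ?thesis .
qed

lemma w0_t: "1 \<le> i \<Longrightarrow> i < j \<Longrightarrow> j \<le> N \<Longrightarrow>
   w0 N (transpose i j x) = transpose (N+1-j) (N+1-i) (w0 N x)"
  by (auto simp: w0_def transpose_def)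

lemma step_rho:
  assumes st: "bruhat_step m y y'"
  shows "bruhat_step (m+2) (rho (m+2) y) (rho (m+2) y') \<and> y' permutes {1..m}"
proof -
  from st obtain t where y: "y \<in> F m" and t: "t \<in> transpositions m" and y': "y' = t \<circ> y \<circ> t"
    and le: "len m y \<le> len m y'" by (auto simp: bruhat_step_def)
  from t obtain i j where tij: "t = transpose i j" "1 \<le> i" "i < j" "j \<le> m" by (auto simp: transpositions_def)
  have yp: "y permutes {1..m}" using y by (simp add: F_def S_def)
  have tp: "t permutes {1..m}" using tij by (auto intro: permutes_swap_id)
  have y'p: "y' permutes {1..m}" unfolding y' by (intro permutes_compose yp tp)
  define t' where "t' = transpose (Suc (Suc (Suc m))-j) (Suc (Suc (Suc m))-i)"
  have t'T: "t' \<in> transpositions (m+2)"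
  proof -
    have "1 \<le> Suc (Suc (Suc m))-j" "Suc (Suc (Suc m))-j < Suc (Suc (Suc m))-i" "Suc (Suc (Suc m))-i \<le> m+2" using tij by auto
    thus ?thesis unfolding t'_def transpositions_def by blast
  qed
  have a: "w0 (m+2) (t x) = t' (w0 (m+2) x)" for x
    using w0_t[OF tij(2,3), of "m+2" x] tij(4) by (simp add: tij(1) t'_def)
  have c: "t (w0 (m+2) x) = w0 (m+2) (t' x)" for x
    using a[of "w0 (m+2) x"] by (metis w0_w0)
  have b: "t (s (Suc m) x) = s (Suc m) (t x)" for x
    using tij by (auto simp: s_def transpose_def)
  have "rho (m+2) y' = t' \<circ> rho (m+2) y \<circ> t'"
  proof (rule ext)
    fix x
    have "rho (m+2) y' x = w0 (m+2) (t (y (t (s (Suc m) (w0 (m+2) x)))))" by (simp add: rho_def y')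
    also have "\<dots> = t' (w0 (m+2) (y (s (Suc m) (t (w0 (m+2) x)))))" by (simp only: a b)
    also have "\<dots> = t' (w0 (m+2) (y (s (Suc m) (w0 (m+2) (t' x)))))" by (simp only: c)
    also have "\<dots> = (t' \<circ> rho (m+2) y \<circ> t') x" by (simp add: rho_def)
    finally show "rho (m+2) y' x = (t' \<circ> rho (m+2) y \<circ> t') x" .
  qed
  moreover have "len (m+2) (rho (m+2) y) \<le> len (m+2) (rho (m+2) y')"
    using len_rho[OF yp] len_rho[OF y'p] le by simp
  ultimately show ?thesis using rho_F[OF y] t'T y'p by (auto simp: bruhat_step_def)
qed

lemma chain_rho:
  assumes "(bruhat_step m)\<^sup>*\<^sup>* z z'"
  shows "(bruhat_step (m+2))\<^sup>*\<^sup>* (rho (m+2) z) (rho (m+2) z')"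
  using assms
proof (induction rule: rtranclp_induct)
  case base thus ?case by simp
next
  case (step y y')
  thus ?case using step_rho[OF step(2)] by (meson rtranclp.rtrancl_into_rtrancl)
qed

theorem proposition3p2:
  fixes n :: nat
  assumes "even n" and "4 \<le> n"
  shows "Y1 n \<subseteq> F n
    \<and> (\<forall>z \<in> F (n - 2). \<forall>z' \<in> F (n - 2).
         bruhatF (n - 2) z z' \<longrightarrow> bruhatF n (rho n z) (rho n z'))
    \<and> inj_on (rho n) (F (n - 2))
    \<and> rho n ` F (n - 2) = Y1 n"
proof -
  define m where "m = n - 2"
  have n: "n = m + 2" using assms(2) unfolding m_def by simp
  have m: "n - 2 = m" using n by simp
  show ?thesis unfolding m Y1_def
  proof (intro conjI ballI impI)
    show "rho n ` F m \<subseteq> F n" unfolding n using rho_F by blast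
  next
    fix z z' assume "z \<in> F m" "z' \<in> F m" "bruhatF m z z'"
    thus "bruhatF n (rho n z) (rho n z')" unfolding n bruhatF_def using rho_F chain_rho by blast
  next
    show "inj_on (rho n) (F m)" unfolding n by (rule inj_onI) (rule rho_inj)
  qed simp
qed

end
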